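(* Let $R$ be a ring, $\mathfrak{M}$ a formation of $R$-modules, $G$ a group and $A$ an $RG$-module. (i) If $L\le H$ are subgroups of $G$ and $A/C_A(H)\in\mathfrak{M}$, then $A/C_A(L)\in\mathfrak{M}$. (ii) If $L,H$ are subgroups of $G$ with $A/C_A(H)\in\mathfrak{M}$ and $A/C_A(L)\in\mathfrak{M}$, then $A/C_A(\langle H,L\rangle)\in\mathfrak{M}$.
   Context: For a subgroup $H\le G$, $C_A(H)=\{a\in A: ah=a \text{ for all } h\in H\}$ (an $R$-submodule). A class $\mathfrak{M}$ of $R$-modules is a formation if (F1) whenever $A\in\mathfrak{M}$ and $B$ is an $R$-submodule of $A$, then $A/B\in\mathfrak{M}$; and (F2) whenever $A$ is an $R$-module and $B_1,\dots,B_k$ are $R$-submodules with $A/B_j\in\mathfrak{M}$ for all $j$, then $A/(B_1\cap\dots\cap B_k)\in\mathfrak{M}$. *)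

theory Defs
  imports "HOL-Algebra.Generated_Groups"
begin

text \<open>Right R-modules over a ring R (a type of class ring_1), given by an explicit
  carrier set and operations; elements are written on the left of scalars (a r).\<close>

record ('r, 'm) Rmod =
  mcar   :: "'m set"
  madd   :: "'m \<Rightarrow> 'm \<Rightarrow> 'm"
  mzero  :: "'m"
  mneg   :: "'m \<Rightarrow> 'm"
  msmult :: "'m \<Rightarrow> 'r \<Rightarrow> 'm"

definition rmodule :: "('r::ring_1, 'm) Rmod \<Rightarrow> bool" where
  "rmodule M \<longleftrightarrow>
     mzero M \<in> mcar M \<and>
     (\<forall>x\<in>mcar M. \<forall>y\<in>mcar M. madd M x y \<in> mcar M) \<and>
     (\<forall>x\<in>mcar M. mneg M x \<in> mcar M) \<and>
     (\<forall>x\<in>mcar M. \<forall>r. msmult M x r \<in> mcar M) \<and>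
     (\<forall>x\<in>mcar M. \<forall>y\<in>mcar M. \<forall>z\<in>mcar M. madd M (madd M x y) z = madd M x (madd M y z)) \<and>
     (\<forall>x\<in>mcar M. \<forall>y\<in>mcar M. madd M x y = madd M y x) \<and>
     (\<forall>x\<in>mcar M. madd M x (mzero M) = x) \<and>
     (\<forall>x\<in>mcar M. madd M x (mneg M x) = mzero M) \<and>
     (\<forall>x\<in>mcar M. \<forall>y\<in>mcar M. \<forall>r. msmult M (madd M x y) r = madd M (msmult M x r) (msmult M y r)) \<and>
     (\<forall>x\<in>mcar M. \<forall>r s. msmult M x (r + s) = madd M (msmult M x r) (msmult M x s)) \<and>
     (\<forall>x\<in>mcar M. \<forall>r s. msmult M x (r * s) = msmult M (msmult M x r) s) \<and>
     (\<forall>x\<in>mcar M. msmult M x 1 = x)"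

definition is_submod :: "('r::ring_1, 'm) Rmod \<Rightarrow> 'm set \<Rightarrow> bool" where
  "is_submod M B \<longleftrightarrow> B \<subseteq> mcar M \<and> mzero M \<in> B \<and>
     (\<forall>x\<in>B. \<forall>y\<in>B. madd M x y \<in> B) \<and> (\<forall>x\<in>B. mneg M x \<in> B) \<and>
     (\<forall>x\<in>B. \<forall>r. msmult M x r \<in> B)"

definition mcoset :: "('r, 'm) Rmod \<Rightarrow> 'm set \<Rightarrow> 'm \<Rightarrow> 'm set" where
  "mcoset M B a = {madd M a b | b. b \<in> B}"

definition quot :: "('r, 'm) Rmod \<Rightarrow> 'm set \<Rightarrow> ('r, 'm set) Rmod" where
  "quot M B =
     \<lparr> mcar = mcoset M B ` mcar M,
       madd = (\<lambda>X Y. mcoset M B (madd M (SOME x. x \<in> X) (SOME y. y \<in> Y))),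
       mzero = B,
       mneg = (\<lambda>X. mcoset M B (mneg M (SOME x. x \<in> X))),
       msmult = (\<lambda>X r. mcoset M B (msmult M (SOME x. x \<in> X) r)) \<rparr>"

definition mod_iso :: "('r, 'm) Rmod \<Rightarrow> ('r, 'n) Rmod \<Rightarrow> bool" where
  "mod_iso M N \<longleftrightarrow> (\<exists>f. bij_betw f (mcar M) (mcar N) \<and>
     (\<forall>x\<in>mcar M. \<forall>y\<in>mcar M. f (madd M x y) = madd N (f x) (f y)) \<and>
     (\<forall>x\<in>mcar M. \<forall>r. f (msmult M x r) = msmult N (f x) r))"

text \<open>A class of R-modules is represented by a set K of modules whose elements lie in a
  fixed type 'm; a module N (of any type) belongs to the class if it is isomorphic
  to a member of K (classes of modules are understood up to isomorphism).\<close>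
definition in_class :: "('r, 'm) Rmod set \<Rightarrow> ('r, 'n) Rmod \<Rightarrow> bool" where
  "in_class K N \<longleftrightarrow> (\<exists>M\<in>K. mod_iso M N)"

text \<open>Formation axioms (F1), (F2), required for all R-modules with elements in 'm.\<close>
definition formation :: "('r::ring_1, 'm) Rmod set \<Rightarrow> bool" where
  "formation K \<longleftrightarrow>
     (\<forall>K0\<in>K. rmodule K0) \<and>
     (\<forall>(A::('r,'m) Rmod) B. rmodule A \<and> in_class K A \<and> is_submod A B
          \<longrightarrow> in_class K (quot A B)) \<and>
     (\<forall>(A::('r,'m) Rmod) \<B>. rmodule A \<and> finite \<B> \<and> \<B> \<noteq> {} \<and>
          (\<forall>B\<in>\<B>. is_submod A B \<and> in_class K (quot A B))
          \<longrightarrow> in_class K (quot A (\<Inter>\<B>)))"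

definition rg_module :: "('g, 'b) monoid_scheme \<Rightarrow> ('r::ring_1, 'm) Rmod \<Rightarrow> ('m \<Rightarrow> 'g \<Rightarrow> 'm) \<Rightarrow> bool" where
  "rg_module G A act \<longleftrightarrow> group G \<and> rmodule A \<and>
     (\<forall>g\<in>carrier G. \<forall>a\<in>mcar A. act a g \<in> mcar A) \<and>
     (\<forall>g\<in>carrier G. \<forall>a\<in>mcar A. \<forall>b\<in>mcar A. act (madd A a b) g = madd A (act a g) (act b g)) \<and>
     (\<forall>g\<in>carrier G. \<forall>a\<in>mcar A. \<forall>r. act (msmult A a r) g = msmult A (act a g) r) \<and>
     (\<forall>a\<in>mcar A. act a \<one>\<^bsub>G\<^esub> = a) \<and>
     (\<forall>g\<in>carrier G. \<forall>h\<in>carrier G. \<forall>a\<in>mcar A. act a (g \<otimes>\<^bsub>G\<^esub> h) = act (act a g) h)"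

definition centralizer_mod :: "('r, 'm) Rmod \<Rightarrow> ('m \<Rightarrow> 'g \<Rightarrow> 'm) \<Rightarrow> 'g set \<Rightarrow> 'm set" where
  "centralizer_mod A act H = {a \<in> mcar A. \<forall>h\<in>H. act a h = a}"

end

theory Submission
  imports Defs
begin

locale rmod =
  fixes A :: "('r::ring_1, 'm) Rmod"
  assumes rm: "rmodule A"
begin

lemma zc: "mzero A \<in> mcar A" using rm unfolding rmodule_def by (elim conjE) blast
lemma ac: "x \<in> mcar A \<Longrightarrow> y \<in> mcar A \<Longrightarrow> madd A x y \<in> mcar A" using rm unfolding rmodule_def by (elim conjE) blast
lemma nc: "x \<in> mcar A \<Longrightarrow> mneg A x \<in> mcar A" using rm unfolding rmodule_def by (elim conjE) blast
lemma sc: "x \<in> mcar A \<Longrightarrow> msmult A x r \<in> mcar A" using rm unfolding rmodule_def by (elim conjE) blast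
lemma assoc: "x \<in> mcar A \<Longrightarrow> y \<in> mcar A \<Longrightarrow> z \<in> mcar A \<Longrightarrow> madd A (madd A x y) z = madd A x (madd A y z)" using rm unfolding rmodule_def by (elim conjE) blast
lemma comm: "x \<in> mcar A \<Longrightarrow> y \<in> mcar A \<Longrightarrow> madd A x y = madd A y x" using rm unfolding rmodule_def by (elim conjE) blast
lemma rz: "x \<in> mcar A \<Longrightarrow> madd A x (mzero A) = x" using rm unfolding rmodule_def by (elim conjE) blast
lemma ri: "x \<in> mcar A \<Longrightarrow> madd A x (mneg A x) = mzero A" using rm unfolding rmodule_def by (elim conjE) blast
lemma sd: "x \<in> mcar A \<Longrightarrow> y \<in> mcar A \<Longrightarrow> msmult A (madd A x y) r = madd A (msmult A x r) (msmult A y r)" using rm unfolding rmodule_def by (elim conjE) blast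
lemma lz: "x \<in> mcar A \<Longrightarrow> madd A (mzero A) x = x" using rz[of x] comm[of "mzero A" x] zc by simp
lemma li: "x \<in> mcar A \<Longrightarrow> madd A (mneg A x) x = mzero A" using ri[of x] comm[of x "mneg A x"] nc by simp
lemma lcomm: "x \<in> mcar A \<Longrightarrow> y \<in> mcar A \<Longrightarrow> z \<in> mcar A \<Longrightarrow> madd A x (madd A y z) = madd A y (madd A x z)"
  by (metis assoc comm)
lemmas AC = assoc comm lcomm
lemma ri2: "x \<in> mcar A \<Longrightarrow> z \<in> mcar A \<Longrightarrow> madd A x (madd A (mneg A x) z) = z"
  by (metis assoc nc ri lz)
lemma li2: "x \<in> mcar A \<Longrightarrow> z \<in> mcar A \<Longrightarrow> madd A (mneg A x) (madd A x z) = z"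
  by (metis assoc nc li lz)
lemma ri3: "x \<in> mcar A \<Longrightarrow> z \<in> mcar A \<Longrightarrow> madd A x (madd A z (mneg A x)) = z"
  using comm[of z "mneg A x"] ri2[of x z] nc[of x] by simp
lemma li3: "x \<in> mcar A \<Longrightarrow> z \<in> mcar A \<Longrightarrow> madd A (mneg A x) (madd A z x) = z"
  using comm[of z x] li2[of x z] by simp
declare ri3[simp] li3[simp]
declare zc[simp] ac[simp] nc[simp] sc[simp] rz[simp] lz[simp] ri[simp] li[simp] ri2[simp] li2[simp]

lemma neg_uniq: assumes "x \<in> mcar A" "z \<in> mcar A" "madd A x z = mzero A" shows "z = mneg A x"
proof -
  have "z = madd A (mneg A x) (madd A x z)" using assms(1,2) by simp
  also have "\<dots> = mneg A x" using assms by simp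
  finally show ?thesis .
qed

lemma neg_add: assumes "x \<in> mcar A" "y \<in> mcar A"
  shows "mneg A (madd A x y) = madd A (mneg A x) (mneg A y)"
proof -
  have "madd A (madd A x y) (madd A (mneg A x) (mneg A y)) = madd A x (madd A (mneg A x) (madd A y (mneg A y)))"
    using assms by (simp add: AC)
  also have "\<dots> = mzero A" using assms by simp
  finally show ?thesis using neg_uniq assms by (metis ac nc)
qed

lemma smult_zero: "msmult A (mzero A) r = mzero A"
proof -
  have e: "msmult A (mzero A) r = madd A (msmult A (mzero A) r) (msmult A (mzero A) r)"
    using sd[of "mzero A" "mzero A" r] by simp
  have "mzero A = madd A (mneg A (msmult A (mzero A) r)) (msmult A (mzero A) r)" by simp
  also have "\<dots> = madd A (mneg A (msmult A (mzero A) r)) (madd A (msmult A (mzero A) r) (msmult A (mzero A) r))"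
    using e by simp
  also have "\<dots> = msmult A (mzero A) r" by simp
  finally show ?thesis by simp
qed

lemma neg_smult: assumes "x \<in> mcar A"
  shows "mneg A (msmult A x r) = msmult A (mneg A x) r"
proof -
  have "madd A (msmult A x r) (msmult A (mneg A x) r) = mzero A"
    using sd[of x "mneg A x" r] assms smult_zero by simp
  thus ?thesis using neg_uniq assms by (metis nc sc)
qed

lemma sub_sub: assumes "x \<in> mcar A" "y \<in> mcar A" "z \<in> mcar A"
  shows "madd A x (mneg A z) = madd A (madd A x (mneg A y)) (madd A y (mneg A z))"
  using assms by (simp add: AC)

lemma neg_sub: assumes "x \<in> mcar A" "y \<in> mcar A"
  shows "mneg A (madd A x (mneg A y)) = madd A y (mneg A x)"
proof -
  have "madd A (madd A x (mneg A y)) (madd A y (mneg A x)) = mzero A"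
    using sub_sub[of x y x] assms by simp
  thus ?thesis using neg_uniq assms by (metis ac nc)
qed

lemma neg_neg: "x \<in> mcar A \<Longrightarrow> mneg A (mneg A x) = x"
  using neg_uniq[of "mneg A x" x] li by simp

lemma sub_in: assumes "is_submod A D" shows "D \<subseteq> mcar A" "mzero A \<in> D"
  "x \<in> D \<Longrightarrow> y \<in> D \<Longrightarrow> madd A x y \<in> D" "x \<in> D \<Longrightarrow> mneg A x \<in> D"
  "x \<in> D \<Longrightarrow> msmult A x r \<in> D"
  using assms unfolding is_submod_def by blast+

lemma mem_coset: assumes "is_submod A D" "a \<in> mcar A"
  shows "x \<in> mcoset A D a \<longleftrightarrow> x \<in> mcar A \<and> madd A x (mneg A a) \<in> D"
proof
  assume "x \<in> mcoset A D a"
  then obtain d where d: "d \<in> D" "x = madd A a d" unfolding mcoset_def by blast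
  have dc: "d \<in> mcar A" using d sub_in[OF assms(1)] by blast
  have "madd A x (mneg A a) = d" using d dc assms by (simp add: AC)
  thus "x \<in> mcar A \<and> madd A x (mneg A a) \<in> D" using d dc assms by simp
next
  assume h: "x \<in> mcar A \<and> madd A x (mneg A a) \<in> D"
  have "x = madd A a (madd A x (mneg A a))" using h assms by (simp add: AC)
  thus "x \<in> mcoset A D a" using h unfolding mcoset_def by blast
qed

lemma coset_eq: assumes "is_submod A D" "a \<in> mcar A" "b \<in> mcar A"
  shows "mcoset A D a = mcoset A D b \<longleftrightarrow> madd A a (mneg A b) \<in> D"
proof
  assume "mcoset A D a = mcoset A D b"
  moreover have "a \<in> mcoset A D a" using mem_coset[OF assms(1,2)] assms(2) sub_in(2)[OF assms(1)] by simp
  ultimately show "madd A a (mneg A b) \<in> D" using mem_coset[OF assms(1,3)] by blast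
next
  assume h: "madd A a (mneg A b) \<in> D"
  have h2: "madd A b (mneg A a) \<in> D"
    using sub_in(4)[OF assms(1) h] neg_sub[OF assms(2,3)] by simp
  have t: "madd A x (mneg A c) \<in> D"
    if "x \<in> mcar A" "c \<in> mcar A" "e \<in> mcar A" "madd A x (mneg A e) \<in> D" "madd A e (mneg A c) \<in> D" for x c e
  proof -
    have "madd A x (mneg A c) = madd A (madd A x (mneg A e)) (madd A e (mneg A c))"
      by (rule sub_sub) (use that in auto)
    thus ?thesis using sub_in(3)[OF assms(1) that(4,5)] by simp
  qed
  show "mcoset A D a = mcoset A D b"
    unfolding set_eq_iff mem_coset[OF assms(1,2)] mem_coset[OF assms(1,3)]
    using t[of _ b a] t[of _ a b] h h2 assms by blast
qed

lemma coset_self: "is_submod A D \<Longrightarrow> a \<in> mcar A \<Longrightarrow> a \<in> mcoset A D a"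
  using mem_coset sub_in by simp

lemma coset_sub: "is_submod A D \<Longrightarrow> a \<in> mcar A \<Longrightarrow> mcoset A D a \<subseteq> mcar A"
  using mem_coset by blast

lemma coset_rep: assumes "is_submod A D" "a \<in> mcar A"
  shows "(SOME x. x \<in> mcoset A D a) \<in> mcar A \<and> mcoset A D (SOME x. x \<in> mcoset A D a) = mcoset A D a"
proof -
  have "(SOME x. x \<in> mcoset A D a) \<in> mcoset A D a" using coset_self[OF assms] by (metis someI)
  thus ?thesis using mem_coset coset_eq assms by metis
qed

lemma coset_add: assumes "is_submod A D" "a \<in> mcar A" "b \<in> mcar A" "a' \<in> mcar A" "b' \<in> mcar A"
  "mcoset A D a = mcoset A D a'" "mcoset A D b = mcoset A D b'"
  shows "mcoset A D (madd A a b) = mcoset A D (madd A a' b')"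
proof -
  have "madd A (madd A a b) (mneg A (madd A a' b')) =
        madd A (madd A a (mneg A a')) (madd A b (mneg A b'))"
    using assms neg_add by (simp add: AC)
  moreover have "madd A a (mneg A a') \<in> D" "madd A b (mneg A b') \<in> D" using assms coset_eq by auto
  ultimately show ?thesis using coset_eq assms sub_in by simp
qed

lemma coset_smult: assumes "is_submod A D" "a \<in> mcar A" "a' \<in> mcar A"
  "mcoset A D a = mcoset A D a'"
  shows "mcoset A D (msmult A a r) = mcoset A D (msmult A a' r)"
proof -
  have "madd A (msmult A a r) (mneg A (msmult A a' r)) = msmult A (madd A a (mneg A a')) r"
    using assms neg_smult sd by simp
  moreover have "madd A a (mneg A a') \<in> D" using assms coset_eq by auto
  ultimately show ?thesis using coset_eq assms sub_in by simp
qed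

lemma coset_neg: assumes "is_submod A D" "a \<in> mcar A" "a' \<in> mcar A"
  "mcoset A D a = mcoset A D a'"
  shows "mcoset A D (mneg A a) = mcoset A D (mneg A a')"
proof -
  have "madd A (mneg A a) (mneg A (mneg A a')) = mneg A (madd A a (mneg A a'))"
    using assms neg_add by simp
  moreover have "madd A a (mneg A a') \<in> D" using assms coset_eq by auto
  ultimately show ?thesis using coset_eq assms sub_in by simp
qed

lemma quot_add: assumes "is_submod A D" "a \<in> mcar A" "b \<in> mcar A"
  shows "madd (quot A D) (mcoset A D a) (mcoset A D b) = mcoset A D (madd A a b)"
proof -
  have e: "madd (quot A D) X Y = mcoset A D (madd A (SOME x. x \<in> X) (SOME y. y \<in> Y))" for X Y
    unfolding quot_def by simp
  show ?thesis unfolding e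
    by (rule coset_add) (use assms coset_rep[OF assms(1,2)] coset_rep[OF assms(1,3)] in auto)
qed

lemma quot_smult: assumes "is_submod A D" "a \<in> mcar A"
  shows "msmult (quot A D) (mcoset A D a) r = mcoset A D (msmult A a r)"
proof -
  have e: "msmult (quot A D) X r = mcoset A D (msmult A (SOME x. x \<in> X) r)" for X
    unfolding quot_def by simp
  show ?thesis unfolding e
    by (rule coset_smult) (use assms coset_rep[OF assms(1,2)] in auto)
qed

lemma coset_zero_iff: assumes "is_submod A D" "a \<in> mcar A"
  shows "mcoset A D a = mcoset A D (mzero A) \<longleftrightarrow> a \<in> D"
proof -
  have "mneg A (mzero A) = mzero A" using neg_uniq[of "mzero A" "mzero A"] by simp
  thus ?thesis using coset_eq[OF assms zc] assms(2) rz by metis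
qed

lemma quot_car: "mcar (quot A D) = mcoset A D ` mcar A"
  unfolding quot_def by simp

end

lemma mod_iso_refl: "mod_iso M M"
  unfolding mod_iso_def by (rule exI[of _ id]) simp

lemma mod_iso_trans: assumes "mod_iso M N" "mod_iso N P" shows "mod_iso M P"
proof -
  obtain f where f: "bij_betw f (mcar M) (mcar N)"
    "\<forall>x\<in>mcar M. \<forall>y\<in>mcar M. f (madd M x y) = madd N (f x) (f y)"
    "\<forall>x\<in>mcar M. \<forall>r. f (msmult M x r) = msmult N (f x) r"
    using assms(1) unfolding mod_iso_def by blast
  obtain g where g: "bij_betw g (mcar N) (mcar P)"
    "\<forall>x\<in>mcar N. \<forall>y\<in>mcar N. g (madd N x y) = madd P (g x) (g y)"
    "\<forall>x\<in>mcar N. \<forall>r. g (msmult N x r) = msmult P (g x) r"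
    using assms(2) unfolding mod_iso_def by blast
  have fi: "x \<in> mcar M \<Longrightarrow> f x \<in> mcar N" for x using f(1) bij_betwE by blast
  show ?thesis unfolding mod_iso_def
    apply (rule exI[of _ "g \<circ> f"])
    using bij_betw_trans[OF f(1) g(1)] f g fi by simp
qed

lemma iso_lemma:
  fixes M :: "('r::ring_1, 'm) Rmod" and A :: "('r, 'n) Rmod"
  assumes rM: "rmodule M" and rA: "rmodule A" and sD: "is_submod A D"
    and pc: "\<And>x. x \<in> mcar M \<Longrightarrow> p x \<in> mcar A"
    and padd: "\<And>x y. x \<in> mcar M \<Longrightarrow> y \<in> mcar M \<Longrightarrow>
          mcoset A D (p (madd M x y)) = mcoset A D (madd A (p x) (p y))"
    and psm: "\<And>x r. x \<in> mcar M \<Longrightarrow>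
          mcoset A D (p (msmult M x r)) = mcoset A D (msmult A (p x) r)"
    and psurj: "\<And>a. a \<in> mcar A \<Longrightarrow> \<exists>x\<in>mcar M. mcoset A D (p x) = mcoset A D a"
    and Bdef: "B = {x \<in> mcar M. p x \<in> D}"
  shows "is_submod M B \<and> mod_iso (quot M B) (quot A D)"
proof -
  interpret M: rmod M by (rule rmod.intro[OF rM])
  interpret A: rmod A by (rule rmod.intro[OF rA])
  let ?c = "mcoset A D"
  have Bc: "B = {x \<in> mcar M. ?c (p x) = ?c (mzero A)}"
    using A.coset_zero_iff[OF sD] pc Bdef by auto
  have cadd: "?c (madd A u v) = ?c (madd A u' v')"
    if "u \<in> mcar A" "v \<in> mcar A" "u' \<in> mcar A" "v' \<in> mcar A" "?c u = ?c u'" "?c v = ?c v'" for u v u' v'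
    using A.coset_add[OF sD] that by blast
  have cneg: "?c (mneg A u) = ?c (mneg A u')" if "u \<in> mcar A" "u' \<in> mcar A" "?c u = ?c u'" for u u'
    using A.coset_neg[OF sD] that by blast
  have csm: "?c (msmult A u r) = ?c (msmult A u' r)" if "u \<in> mcar A" "u' \<in> mcar A" "?c u = ?c u'" for u u' r
    using A.coset_smult[OF sD] that by blast
  have p0: "?c (p (mzero M)) = ?c (mzero A)"
  proof -
    have "?c (p (mzero M)) = ?c (madd A (p (mzero M)) (p (mzero M)))"
      using padd[of "mzero M" "mzero M"] by simp
    hence "?c (madd A (mneg A (p (mzero M))) (p (mzero M))) =
       ?c (madd A (mneg A (p (mzero M))) (madd A (p (mzero M)) (p (mzero M))))"
      by (intro cadd) (use pc in auto)
    thus ?thesis using pc by simp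
  qed
  have pneg: "?c (p (mneg M x)) = ?c (mneg A (p x))" if x: "x \<in> mcar M" for x
  proof -
    have "?c (madd A (p x) (p (mneg M x))) = ?c (mzero A)"
      using padd[of x "mneg M x"] x p0 by simp
    hence "?c (madd A (mneg A (p x)) (madd A (p x) (p (mneg M x)))) = ?c (madd A (mneg A (p x)) (mzero A))"
      by (intro cadd) (use pc x in auto)
    thus ?thesis using pc x by simp
  qed
  have Bmem: "x \<in> B \<longleftrightarrow> x \<in> mcar M \<and> ?c (p x) = ?c (mzero A)" for x
    unfolding Bc by simp
  have sB: "is_submod M B"
  proof -
    have "mzero M \<in> B" using Bmem p0 by simp
    moreover have "madd M x y \<in> B" if "x \<in> B" "y \<in> B" for x y
    proof -
      have xy: "x \<in> mcar M" "y \<in> mcar M" "?c (p x) = ?c (mzero A)" "?c (p y) = ?c (mzero A)"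
        using that Bmem by auto
      have "?c (p (madd M x y)) = ?c (madd A (p x) (p y))" using xy padd by blast
      also have "\<dots> = ?c (madd A (mzero A) (mzero A))" by (intro cadd) (use xy pc in auto)
      finally show ?thesis using xy Bmem by simp
    qed
    moreover have "mneg M x \<in> B" if "x \<in> B" for x
    proof -
      have xy: "x \<in> mcar M" "?c (p x) = ?c (mzero A)"
        using that Bmem by auto
      have "?c (p (mneg M x)) = ?c (mneg A (p x))" using xy pneg by blast
      also have "\<dots> = ?c (mneg A (mzero A))" by (intro cneg) (use xy pc in auto)
      also have "mneg A (mzero A) = mzero A" using A.neg_uniq[of "mzero A" "mzero A"] by simp
      finally show ?thesis using xy Bmem by simp
    qed
    moreover have "msmult M x r \<in> B" if "x \<in> B" for x r
    proof -
      have xy: "x \<in> mcar M" "?c (p x) = ?c (mzero A)"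
        using that Bmem by auto
      have "?c (p (msmult M x r)) = ?c (msmult A (p x) r)" using xy psm by blast
      also have "\<dots> = ?c (msmult A (mzero A) r)" by (intro csm) (use xy pc in auto)
      finally show ?thesis using xy Bmem A.smult_zero by simp
    qed
    moreover have "B \<subseteq> mcar M" using Bmem by blast
    ultimately show ?thesis unfolding is_submod_def by blast
  qed
  let ?b = "mcoset M B"
  define g where "g X = ?c (p (SOME x. x \<in> X))" for X
  have gb: "g (?b m) = ?c (p m)" if m: "m \<in> mcar M" for m
  proof -
    obtain x where x: "x = (SOME x. x \<in> ?b m)" by blast
    have xc: "x \<in> mcar M" "?b x = ?b m" using M.coset_rep[OF sB m] x by auto
    hence "madd M x (mneg M m) \<in> B" using M.coset_eq[OF sB] m by blast
    hence "?c (p (madd M x (mneg M m))) = ?c (mzero A)" using Bc by simp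
    have "?c (p x) = ?c (p (madd M (madd M x (mneg M m)) m))" using xc m by (simp add: M.AC)
    also have "\<dots> = ?c (madd A (p (madd M x (mneg M m))) (p m))" using xc m padd by simp
    also have "\<dots> = ?c (madd A (mzero A) (p m))"
      using xc m pc \<open>?c (p (madd M x (mneg M m))) = ?c (mzero A)\<close> by (intro cadd) auto
    finally show ?thesis using g_def x m pc by simp
  qed
  have inj: "inj_on g (mcar (quot M B))"
  proof (rule inj_onI)
    fix X Y assume XY: "X \<in> mcar (quot M B)" "Y \<in> mcar (quot M B)" "g X = g Y"
    then obtain m m' where mm: "m \<in> mcar M" "m' \<in> mcar M" "X = ?b m" "Y = ?b m'"
      using M.quot_car by auto
    have e: "?c (p m) = ?c (p m')" using XY mm gb by simp
    have "?c (p (madd M m (mneg M m'))) = ?c (madd A (p m) (p (mneg M m')))" using padd mm by simp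
    also have "\<dots> = ?c (madd A (p m') (mneg A (p m')))" using mm pc e pneg by (intro cadd) auto
    finally have "madd M m (mneg M m') \<in> B" using Bmem mm pc[OF mm(2)] by simp
    thus "X = Y" using M.coset_eq[OF sB] mm by simp
  qed
  have img: "g ` mcar (quot M B) = mcar (quot A D)"
  proof
    show "g ` mcar (quot M B) \<subseteq> mcar (quot A D)" using M.quot_car A.quot_car gb pc by auto
    show "mcar (quot A D) \<subseteq> g ` mcar (quot M B)"
    proof
      fix Y assume "Y \<in> mcar (quot A D)"
      then obtain a where a: "a \<in> mcar A" "Y = ?c a" using A.quot_car by auto
      then obtain x where x: "x \<in> mcar M" "?c (p x) = ?c a" using psurj by blast
      have "Y = g (?b x)" using x a gb by simp
      thus "Y \<in> g ` mcar (quot M B)" using x M.quot_car by auto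
    qed
  qed
  have hadd: "g (madd (quot M B) X Y) = madd (quot A D) (g X) (g Y)"
    if XY: "X \<in> mcar (quot M B)" "Y \<in> mcar (quot M B)" for X Y
  proof -
    obtain m m' where mm: "m \<in> mcar M" "m' \<in> mcar M" "X = ?b m" "Y = ?b m'"
      using XY M.quot_car by auto
    have "g (madd (quot M B) X Y) = g (?b (madd M m m'))" using mm M.quot_add[OF sB] by simp
    also have "\<dots> = ?c (p (madd M m m'))" using gb mm by simp
    also have "\<dots> = ?c (madd A (p m) (p m'))" using padd mm by blast
    also have "\<dots> = madd (quot A D) (?c (p m)) (?c (p m'))" using A.quot_add[OF sD] pc mm by simp
    also have "\<dots> = madd (quot A D) (g X) (g Y)" using gb mm by simp
    finally show ?thesis .
  qed
  have hsm: "g (msmult (quot M B) X r) = msmult (quot A D) (g X) r"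
    if XY: "X \<in> mcar (quot M B)" for X r
  proof -
    obtain m where mm: "m \<in> mcar M" "X = ?b m"
      using XY M.quot_car by auto
    have "g (msmult (quot M B) X r) = g (?b (msmult M m r))" using mm M.quot_smult[OF sB] by simp
    also have "\<dots> = ?c (p (msmult M m r))" using gb mm by simp
    also have "\<dots> = ?c (msmult A (p m) r)" using psm mm by blast
    also have "\<dots> = msmult (quot A D) (?c (p m)) r" using A.quot_smult[OF sD] pc mm by simp
    also have "\<dots> = msmult (quot A D) (g X) r" using gb mm by simp
    finally show ?thesis .
  qed
  have "mod_iso (quot M B) (quot A D)"
    unfolding mod_iso_def
    apply (rule exI[of _ g])
    using inj img hadd hsm unfolding bij_betw_def by simp
  thus ?thesis using sB by simp
qed

lemma part1:
  fixes K :: "('r::ring_1, 'm) Rmod set" and A :: "('r, 'n) Rmod"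
  assumes F: "formation K" and rA: "rmodule A" and sC: "is_submod A C" and sD: "is_submod A D"
    and CD: "C \<subseteq> D" and inC: "in_class K (quot A C)"
  shows "in_class K (quot A D)"
proof -
  interpret A: rmod A by (rule rmod.intro[OF rA])
  obtain M where MK: "M \<in> K" and iso: "mod_iso M (quot A C)" using inC unfolding in_class_def by blast
  have rM: "rmodule M" using F MK unfolding formation_def by blast
  obtain f where f: "bij_betw f (mcar M) (mcar (quot A C))"
    "\<forall>x\<in>mcar M. \<forall>y\<in>mcar M. f (madd M x y) = madd (quot A C) (f x) (f y)"
    "\<forall>x\<in>mcar M. \<forall>r. f (msmult M x r) = msmult (quot A C) (f x) r"
    using iso unfolding mod_iso_def by blast
  define p where "p m = (SOME a. a \<in> f m)" for m
  have pm: "p m \<in> mcar A \<and> mcoset A C (p m) = f m" if m: "m \<in> mcar M" for m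
  proof -
    have "f m \<in> mcar (quot A C)" using f(1) m bij_betwE by blast
    then obtain a where a: "a \<in> mcar A" "f m = mcoset A C a" using A.quot_car by auto
    show ?thesis using A.coset_rep[OF sC a(1)] a p_def by simp
  qed
  have CtoD: "mcoset A D u = mcoset A D v"
    if "u \<in> mcar A" "v \<in> mcar A" "mcoset A C u = mcoset A C v" for u v
    using that A.coset_eq[OF sC] A.coset_eq[OF sD] CD by blast
  have padd: "mcoset A D (p (madd M x y)) = mcoset A D (madd A (p x) (p y))"
    if xy: "x \<in> mcar M" "y \<in> mcar M" for x y
  proof -
    interpret M: rmod M by (rule rmod.intro[OF rM])
    have "mcoset A C (p (madd M x y)) = f (madd M x y)" using pm xy by simp
    also have "\<dots> = madd (quot A C) (f x) (f y)" using f(2) xy by blast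
    also have "\<dots> = madd (quot A C) (mcoset A C (p x)) (mcoset A C (p y))" using pm xy by metis
    also have "\<dots> = mcoset A C (madd A (p x) (p y))" using A.quot_add[OF sC, of "p x" "p y"] pm xy by simp
    finally show ?thesis using CtoD pm xy by simp
  qed
  have psm: "mcoset A D (p (msmult M x r)) = mcoset A D (msmult A (p x) r)"
    if xy: "x \<in> mcar M" for x r
  proof -
    interpret M: rmod M by (rule rmod.intro[OF rM])
    have "mcoset A C (p (msmult M x r)) = f (msmult M x r)" using pm xy by simp
    also have "\<dots> = msmult (quot A C) (f x) r" using f(3) xy by blast
    also have "\<dots> = msmult (quot A C) (mcoset A C (p x)) r" using pm xy by metis
    also have "\<dots> = mcoset A C (msmult A (p x) r)" using A.quot_smult[OF sC, of "p x"] pm xy by simp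
    finally show ?thesis using CtoD pm xy by simp
  qed
  have psurj: "\<exists>x\<in>mcar M. mcoset A D (p x) = mcoset A D a" if a: "a \<in> mcar A" for a
  proof -
    have "mcoset A C a \<in> mcar (quot A C)" using a A.quot_car by auto
    then obtain x where x: "x \<in> mcar M" "f x = mcoset A C a" using f(1) unfolding bij_betw_def by (metis imageE)
    hence "mcoset A C (p x) = mcoset A C a" using pm by simp
    thus ?thesis using CtoD pm x a by blast
  qed
  define B where "B = {x \<in> mcar M. p x \<in> D}"
  have r: "is_submod M B \<and> mod_iso (quot M B) (quot A D)"
    by (rule iso_lemma[OF rM rA sD _ padd psm psurj B_def]) (use pm in auto)
  have "in_class K M" unfolding in_class_def using MK mod_iso_refl by blast
  hence "in_class K (quot M B)" using F rM r unfolding formation_def by blast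
  then obtain M' where "M' \<in> K" "mod_iso M' (quot M B)" unfolding in_class_def by blast
  thus ?thesis unfolding in_class_def using mod_iso_trans r by blast
qed

lemma cent_submod:
  assumes rg: "rg_module G A act" and HG: "H \<subseteq> carrier G"
  shows "is_submod A (centralizer_mod A act H)"
proof -
  have rA: "rmodule A" using rg unfolding rg_module_def by blast
  interpret A: rmod A by (rule rmod.intro[OF rA])
  have acc: "\<And>g a. g \<in> carrier G \<Longrightarrow> a \<in> mcar A \<Longrightarrow> act a g \<in> mcar A"
   and aadd: "\<And>g a b. g \<in> carrier G \<Longrightarrow> a \<in> mcar A \<Longrightarrow> b \<in> mcar A \<Longrightarrow> act (madd A a b) g = madd A (act a g) (act b g)"
   and asm: "\<And>g a r. g \<in> carrier G \<Longrightarrow> a \<in> mcar A \<Longrightarrow> act (msmult A a r) g = msmult A (act a g) r"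
    using rg unfolding rg_module_def by blast+
  let ?Z = "centralizer_mod A act H"
  have "mzero A \<in> ?Z"
  proof -
    have "act (mzero A) h = mzero A" if h: "h \<in> H" for h
    proof -
      have hc: "h \<in> carrier G" using h HG by blast
      have e: "act (mzero A) h = madd A (act (mzero A) h) (act (mzero A) h)"
        using aadd[OF hc A.zc A.zc] by simp
      have "mzero A = madd A (mneg A (act (mzero A) h)) (act (mzero A) h)" using acc[OF hc A.zc] by simp
      also have "\<dots> = madd A (mneg A (act (mzero A) h)) (madd A (act (mzero A) h) (act (mzero A) h))"
        using e by simp
      also have "\<dots> = act (mzero A) h" using acc[OF hc A.zc] by simp
      finally show ?thesis by simp
    qed
    thus ?thesis unfolding centralizer_mod_def by simp
  qed
  moreover have "madd A a b \<in> ?Z" if "a \<in> ?Z" "b \<in> ?Z" for a b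
    using that aadd HG unfolding centralizer_mod_def by auto
  moreover have "msmult A a r \<in> ?Z" if "a \<in> ?Z" for a r
    using that asm HG unfolding centralizer_mod_def by auto
  moreover have "mneg A a \<in> ?Z" if a: "a \<in> ?Z" for a
  proof -
    have "act (mneg A a) h = mneg A a" if h: "h \<in> H" for h
    proof -
      have hc: "h \<in> carrier G" using h HG by blast
      have ac: "a \<in> mcar A" and ah: "act a h = a" using a h unfolding centralizer_mod_def by auto
      have "act (madd A a (mneg A a)) h = madd A (act a h) (act (mneg A a) h)"
        by (rule aadd[OF hc ac]) (use ac in simp)
      hence "madd A a (act (mneg A a) h) = act (madd A a (mneg A a)) h" using ah by simp
      also have "\<dots> = mzero A" using ac \<open>mzero A \<in> ?Z\<close> h unfolding centralizer_mod_def by simp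
      finally show ?thesis using A.neg_uniq acc[OF hc] ac by simp
    qed
    thus ?thesis using a unfolding centralizer_mod_def by simp
  qed
  moreover have "?Z \<subseteq> mcar A" unfolding centralizer_mod_def by blast
  ultimately show ?thesis unfolding is_submod_def by blast
qed

lemma cent_gen:
  assumes rg: "rg_module G A act" and HG: "H \<subseteq> carrier G" and LG: "L \<subseteq> carrier G"
  shows "centralizer_mod A act (generate G (H \<union> L)) = centralizer_mod A act H \<inter> centralizer_mod A act L"
proof
  show "centralizer_mod A act (generate G (H \<union> L)) \<subseteq> centralizer_mod A act H \<inter> centralizer_mod A act L"
    unfolding centralizer_mod_def using generate.incl[of _ "H \<union> L" G] by blast
next
  have grp: "group G" using rg unfolding rg_module_def by blast
  interpret group G by (rule grp)
  have HL: "H \<union> L \<subseteq> carrier G" using HG LG by blast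
  have a1: "\<And>a. a \<in> mcar A \<Longrightarrow> act a \<one>\<^bsub>G\<^esub> = a"
   and am: "\<And>g h a. g \<in> carrier G \<Longrightarrow> h \<in> carrier G \<Longrightarrow> a \<in> mcar A \<Longrightarrow> act a (g \<otimes>\<^bsub>G\<^esub> h) = act (act a g) h"
    using rg unfolding rg_module_def by blast+
  show "centralizer_mod A act H \<inter> centralizer_mod A act L \<subseteq> centralizer_mod A act (generate G (H \<union> L))"
  proof
    fix a assume a: "a \<in> centralizer_mod A act H \<inter> centralizer_mod A act L"
    have ac: "a \<in> mcar A" and fix1: "\<And>h. h \<in> H \<union> L \<Longrightarrow> act a h = a"
      using a unfolding centralizer_mod_def by auto
    have "act a g = a" if "g \<in> generate G (H \<union> L)" for g
      using that
    proof (induction rule: generate.induct)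
      case one
      then show ?case using a1 ac by simp
    next
      case (incl h)
      then show ?case using fix1 by simp
    next
      case (inv h)
      have hc: "h \<in> carrier G" using inv HL by blast
      have "act a (inv\<^bsub>G\<^esub> h) = act (act a h) (inv\<^bsub>G\<^esub> h)" using fix1 inv by simp
      also have "\<dots> = act a (h \<otimes>\<^bsub>G\<^esub> inv\<^bsub>G\<^esub> h)" using am[OF hc inv_closed[OF hc] ac] by simp
      also have "\<dots> = a" using hc a1 ac by simp
      finally show ?case .
    next
      case (eng h1 h2)
      have "h1 \<in> carrier G" "h2 \<in> carrier G" using eng(1,2) generate_in_carrier[OF HL] by auto
      then show ?case using am ac eng by simp
    qed
    thus "a \<in> centralizer_mod A act (generate G (H \<union> L))" using ac unfolding centralizer_mod_def by blast
  qed
qed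

theorem lemma1:
  fixes K :: "('r::ring_1, 'm) Rmod set"
    and G :: "('g, 'b) monoid_scheme"
    and A :: "('r, 'm) Rmod"
    and act :: "'m \<Rightarrow> 'g \<Rightarrow> 'm"
  assumes "formation K"
    and "rg_module G A act"
  shows "(\<forall>L H. subgroup L G \<and> subgroup H G \<and> L \<subseteq> H \<and>
            in_class K (quot A (centralizer_mod A act H))
            \<longrightarrow> in_class K (quot A (centralizer_mod A act L)))
       \<and> (\<forall>L H. subgroup L G \<and> subgroup H G \<and>
            in_class K (quot A (centralizer_mod A act H)) \<and>
            in_class K (quot A (centralizer_mod A act L))
            \<longrightarrow> in_class K (quot A (centralizer_mod A act (generate G (H \<union> L)))))"
proof (intro conjI allI impI)
  have rA: "rmodule A" using assms(2) unfolding rg_module_def by blast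
  fix L H
  assume h: "subgroup L G \<and> subgroup H G \<and> L \<subseteq> H \<and> in_class K (quot A (centralizer_mod A act H))"
  have LG: "L \<subseteq> carrier G" and HG: "H \<subseteq> carrier G" using h subgroup.subset by blast+
  show "in_class K (quot A (centralizer_mod A act L))"
    by (rule part1[OF assms(1) rA cent_submod[OF assms(2) HG] cent_submod[OF assms(2) LG]])
       (use h in \<open>auto simp: centralizer_mod_def\<close>)
next
  fix L H
  assume h: "subgroup L G \<and> subgroup H G \<and>
            in_class K (quot A (centralizer_mod A act H)) \<and>
            in_class K (quot A (centralizer_mod A act L))"
  have rA: "rmodule A" using assms(2) unfolding rg_module_def by blast
  have LG: "L \<subseteq> carrier G" and HG: "H \<subseteq> carrier G" using h subgroup.subset by blast+
  let ?BB = "{centralizer_mod A act H, centralizer_mod A act L}"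
  have F2: "\<And>\<B>. rmodule A \<Longrightarrow> finite \<B> \<Longrightarrow> \<B> \<noteq> {} \<Longrightarrow>
      (\<forall>B\<in>\<B>. is_submod A B \<and> in_class K (quot A B)) \<Longrightarrow> in_class K (quot A (\<Inter>\<B>))"
    using assms(1) unfolding formation_def by blast
  have "in_class K (quot A (\<Inter>?BB))"
    by (rule F2) (use rA h cent_submod[OF assms(2) HG] cent_submod[OF assms(2) LG] in auto)
  moreover have "\<Inter>?BB = centralizer_mod A act (generate G (H \<union> L))"
    using cent_gen[OF assms(2) HG LG] by simp
  ultimately show "in_class K (quot A (centralizer_mod A act (generate G (H \<union> L))))" by simp
qed

end
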